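(* Let $a=(a_1,\dots,a_d)\in\mathcal{UN}_d$ and let $A_a=(a_{ij})$ be a real symmetric matrix associated to $a$. Then there exists $\beta\in\mathbb{R}$ such that $a_{ij}^2=\beta^2$ for all $i\neq j$.
   Context: A polynomial in $\mathbb{R}[z]$ is hyperbolic if all its roots are real. A sequence $a\in\mathbb{R}^d$ is a Nuij sequence if for every hyperbolic $p\in\mathbb{R}[z]$ of degree $d$, $p_a(z,s):=p(z)+\sum_{k=1}^d a_k s^k p^{(k)}(z)$ is hyperbolic for all $s\in\mathbb{R}$. A Nuij sequence $a$ admits a universal determinantal representation if there exists a real symmetric $d\times d$ matrix $A_a$ such that for every monic hyperbolic polynomial $p(z)=(z+\lambda_1)\cdots(z+\lambda_d)$ of degree $d$ one has $p_a(z,s)=\det(zI+D+sA_a)$, where $D$ is the diagonal matrix with diagonal entries $\lambda_1,\dots,\lambda_d$ in an arbitrary order; such $A_a$ is called a matrix associated to $a$. $\mathcal{UN}_d$ is the set of Nuij sequences in $\mathbb{R}^d$ admitting a universal determinantal representation. *)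

theory Defs
  imports "HOL-Analysis.Analysis" "HOL-Computational_Algebra.Polynomial"
begin

definition hyperbolic :: "real poly \<Rightarrow> bool" where
  "hyperbolic p \<longleftrightarrow> (\<forall>z::complex. poly (map_poly complex_of_real p) z = 0 \<longrightarrow> Im z = 0)"

definition nuij_poly :: "nat \<Rightarrow> (nat \<Rightarrow> real) \<Rightarrow> real poly \<Rightarrow> real \<Rightarrow> real poly" where
  "nuij_poly d a p s = p + (\<Sum>k\<in>{1..d}. smult (a k * s ^ k) ((pderiv ^^ k) p))"

definition nuij_seq :: "nat \<Rightarrow> (nat \<Rightarrow> real) \<Rightarrow> bool" where
  "nuij_seq d a \<longleftrightarrow>
     (\<forall>p. hyperbolic p \<and> degree p = d \<longrightarrow> (\<forall>s. hyperbolic (nuij_poly d a p s)))"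

definition diag_mat :: "('n::finite \<Rightarrow> real) \<Rightarrow> real^'n^'n" where
  "diag_mat l = (\<chi> i j. if i = j then l i else 0)"

text \<open>A is a matrix associated to a (d = CARD('n)): real symmetric and for every monic
  hyperbolic p = prod_i (z + l_i) of degree d (any ordering of the l_i, since l ranges over all
  functions on the index type) one has p_a(z,s) = det(zI + D + sA).\<close>
definition associated_matrix :: "(nat \<Rightarrow> real) \<Rightarrow> real^'n::finite^'n \<Rightarrow> bool" where
  "associated_matrix a A \<longleftrightarrow> transpose A = A \<and>
     (\<forall>l::'n \<Rightarrow> real. \<forall>z s.
        poly (nuij_poly CARD('n) a (\<Prod>i\<in>UNIV. [:l i, 1:]) s) z
          = det (z *\<^sub>R mat 1 + diag_mat l + s *\<^sub>R A))"

definition UN_d :: "'n::finite itself \<Rightarrow> (nat \<Rightarrow> real) set" where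
  "UN_d (t::'n itself) = {a. nuij_seq CARD('n) a \<and> (\<exists>A::real^'n^'n. associated_matrix a A)}"

end

theory Submission
  imports Defs "HOL-Combinatorics.Permutations"
begin

definition PP :: "real^'n::finite^'n \<Rightarrow> real^'n^'n \<Rightarrow> real poly" where
  "PP D A = (\<Sum>p\<in>{p. p permutes (UNIV::'n set)}. smult (of_int (sign p)) (\<Prod>k\<in>UNIV. [:D$k$(p k), A$k$(p k):]))"

lemma poly_PP: "poly (PP D A) s = det (D + s *\<^sub>R A)"
  unfolding PP_def det_def by (simp add: poly_sum poly_prod algebra_simps)

lemma prod_lin_zero:
  assumes "finite S" "\<forall>k\<in>S. c k = 0"
  shows "(\<Prod>k\<in>S. [:c k, b k:]) = monom (\<Prod>k\<in>S. b k) (card S)"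
  using assms
proof (induction S rule: finite_induct)
  case empty then show ?case by (simp add: monom_0 one_pCons)
next
  case (insert x F)
  have "[:c x, b x:] = monom (b x) 1" using insert by (simp add: monom_Suc monom_0)
  then show ?case using insert by (simp add: mult_monom)
qed

lemma coeff_prod_lin:
  fixes c b :: "'n::finite \<Rightarrow> real"
  assumes "\<forall>k\<in>S. c k = 0" "m \<le> card S"
  shows "coeff (\<Prod>k\<in>UNIV. [:c k, b k:]) m =
     (if m < card S then 0 else (\<Prod>k\<in>S. b k) * (\<Prod>k\<in>UNIV - S. c k))"
proof -
  have "(\<Prod>k\<in>UNIV. [:c k, b k:]) = (\<Prod>k\<in>UNIV - S. [:c k, b k:]) * (\<Prod>k\<in>S. [:c k, b k:])"
    by (rule prod.subset_diff) auto
  also have "\<dots> = monom (\<Prod>k\<in>S. b k) (card S) * (\<Prod>k\<in>UNIV - S. [:c k, b k:])"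
    using assms by (simp add: prod_lin_zero mult.commute)
  finally have e: "(\<Prod>k\<in>UNIV. [:c k, b k:]) = \<dots>" .
  have c0: "coeff (\<Prod>k\<in>UNIV - S. [:c k, b k:]) 0 = (\<Prod>k\<in>UNIV - S. c k)"
    by (simp add: poly_0_coeff_0[symmetric] poly_prod)
  show ?thesis using assms(2) by (subst e, simp add: coeff_monom_mult c0)
qed

lemma moved_two:
  assumes "p permutes (UNIV::'n::finite set)" "p \<noteq> id"
  obtains k where "p k \<noteq> k" "p (p k) \<noteq> p k"
proof -
  obtain k where k: "p k \<noteq> k" using assms(2) by (metis eq_id_iff)
  have "p (p k) \<noteq> p k" using k assms(1) by (metis permutes_inj injD)
  then show ?thesis using k that by blast
qed

lemma diag_entry: "diag_mat l $ k $ m = (if k = m then l k else 0)"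
  by (simp add: diag_mat_def)

lemma coeff1:
  fixes A :: "real^'n::finite^'n"
  shows "coeff (PP (diag_mat (\<lambda>k. if k = i then 0 else 1)) A) 1 = A$i$i"
proof -
  let ?l = "\<lambda>k::'n. if k = i then 0 else (1::real)"
  let ?P = "{p. p permutes (UNIV::'n set)}"
  let ?f = "\<lambda>p. coeff (smult (of_int (sign p)) (\<Prod>k\<in>UNIV. [:diag_mat ?l$k$(p k), A$k$(p k):])) 1"
  have z: "?f p = 0" if "p \<in> ?P - {id}" for p
  proof -
    from that have pp: "p permutes UNIV" "p \<noteq> id" by auto
    obtain k where k: "p k \<noteq> k" "p (p k) \<noteq> p k" using moved_two[OF pp] .
    let ?S = "{k. p k \<noteq> k}"
    have "{k, p k} \<subseteq> ?S" using k by auto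
    then have "card {k, p k} \<le> card ?S" by (intro card_mono) auto
    then have c: "2 \<le> card ?S" using k by simp
    have "coeff (\<Prod>k\<in>UNIV. [:diag_mat ?l$k$(p k), A$k$(p k):]) 1 = 0"
      by (subst coeff_prod_lin[where S="?S"]) (use c in \<open>auto simp: diag_entry\<close>)
    then show ?thesis by simp
  qed
  have "coeff (PP (diag_mat ?l) A) 1 = (\<Sum>p\<in>?P. ?f p)"
    unfolding PP_def by (simp add: coeff_sum)
  also have "\<dots> = ?f id + (\<Sum>p\<in>?P - {id}. ?f p)"
    by (rule sum.remove) (auto simp: permutes_id)
  also have "(\<Sum>p\<in>?P - {id}. ?f p) = 0" using z by simp
  also have "?f id = A$i$i"
  proof -
    have "coeff (\<Prod>k\<in>UNIV. [:diag_mat ?l$k$(id k), A$k$(id k):]) 1 = (\<Prod>k\<in>{i}. A$k$k) * (\<Prod>k\<in>UNIV - {i}. diag_mat ?l$k$k)"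
      by (subst coeff_prod_lin[where S="{i}"]) (auto simp: diag_entry)
    also have "\<dots> = A$i$i" by (simp add: diag_entry)
    finally show ?thesis by simp
  qed
  finally show ?thesis by simp
qed

lemma perm_in_two:
  assumes "p permutes (UNIV::'n::finite set)" "{k. p k \<noteq> k} \<subseteq> {i, j}" "i \<noteq> j"
  shows "p = id \<or> p = Transposition.transpose i j"
proof (cases "p i = i")
  case True
  have "p j = j"
  proof (rule ccontr)
    assume "p j \<noteq> j"
    then have "j \<in> {k. p k \<noteq> k}" by simp
    have "p (p j) \<noteq> p j" using \<open>p j \<noteq> j\<close> assms(1) by (metis permutes_inj injD)
    then have "p j \<in> {i, j}" using assms(2) by auto
    then have "p j = i" using \<open>p j \<noteq> j\<close> by auto
    then show False using True \<open>p j \<noteq> j\<close> assms(1) assms(3) by (metis permutes_inj injD)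
  qed
  then have "p = id" using True assms(2) by (intro ext) auto
  then show ?thesis by simp
next
  case False
  have inj: "inj p" using assms(1) permutes_inj by blast
  have "p (p i) \<noteq> p i" using False inj by (metis injD)
  then have "p i \<in> {i,j}" using assms(2) by auto
  then have pi: "p i = j" using False by auto
  have "p j \<noteq> j" using pi assms(3) inj by (metis injD)
  have "p (p j) \<noteq> p j" using \<open>p j \<noteq> j\<close> inj by (metis injD)
  then have "p j \<in> {i,j}" using assms(2) by auto
  then have pj: "p j = i" using \<open>p j \<noteq> j\<close> by auto
  have "p = Transposition.transpose i j"
  proof
    fix k show "p k = Transposition.transpose i j k"
      using pi pj assms(2) by (cases "k = i"; cases "k = j") (auto simp: Transposition.transpose_def)
  qed
  then show ?thesis by simp
qed

lemma coeff2:
  fixes A :: "real^'n::finite^'n"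
  assumes ij: "i \<noteq> j"
  shows "coeff (PP (diag_mat (\<lambda>k. if k = i \<or> k = j then 0 else 1)) A) 2 = A$i$i * A$j$j - A$i$j * A$j$i"
proof -
  let ?l = "\<lambda>k::'n. if k = i \<or> k = j then 0 else (1::real)"
  let ?P = "{p. p permutes (UNIV::'n set)}"
  let ?t = "Transposition.transpose i j"
  let ?f = "\<lambda>p. coeff (smult (of_int (sign p)) (\<Prod>k\<in>UNIV. [:diag_mat ?l$k$(p k), A$k$(p k):])) 2"
  have z: "?f p = 0" if "p \<in> ?P - {id, ?t}" for p
  proof -
    from that have pp: "p permutes UNIV" "p \<noteq> id" "p \<noteq> ?t" by auto
    have "\<not> {k. p k \<noteq> k} \<subseteq> {i, j}" using perm_in_two[OF pp(1) _ ij] pp by blast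
    then obtain k where k: "p k \<noteq> k" "k \<noteq> i" "k \<noteq> j" by auto
    let ?S = "{i, j} \<union> {k. p k \<noteq> k}"
    have "{i, j, k} \<subseteq> ?S" using k by auto
    then have "card {i, j, k} \<le> card ?S" by (intro card_mono) auto
    then have c: "3 \<le> card ?S" using k ij by simp
    have "coeff (\<Prod>k\<in>UNIV. [:diag_mat ?l$k$(p k), A$k$(p k):]) 2 = 0"
      by (subst coeff_prod_lin[where S="?S"]) (use c in \<open>auto simp: diag_entry\<close>)
    then show ?thesis by simp
  qed
  have tP: "?t \<in> ?P" by (simp add: permutes_swap_id)
  have tid: "?t \<noteq> id" using ij by (metis id_apply Transposition.transpose_apply_first)
  have "coeff (PP (diag_mat ?l) A) 2 = (\<Sum>p\<in>?P. ?f p)"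
    unfolding PP_def by (simp add: coeff_sum)
  also have "\<dots> = (\<Sum>p\<in>{id, ?t}. ?f p)"
    by (rule sum.mono_neutral_right) (use z tP in \<open>auto simp: permutes_id\<close>)
  also have "\<dots> = ?f id + ?f ?t" using tid by simp
  also have "?f id = A$i$i * A$j$j"
  proof -
    have "coeff (\<Prod>k\<in>UNIV. [:diag_mat ?l$k$(id k), A$k$(id k):]) 2 = (\<Prod>k\<in>{i,j}. A$k$k) * (\<Prod>k\<in>UNIV - {i,j}. diag_mat ?l$k$k)"
      by (subst coeff_prod_lin[where S="{i,j}"]) (use ij in \<open>auto simp: diag_entry\<close>)
    also have "\<dots> = A$i$i * A$j$j" using ij by (simp add: diag_entry)
    finally show ?thesis by simp
  qed
  also have "?f ?t = - (A$i$j * A$j$i)"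
  proof -
    have "coeff (\<Prod>k\<in>UNIV. [:diag_mat ?l$k$(?t k), A$k$(?t k):]) 2 = (\<Prod>k\<in>{i,j}. A$k$(?t k)) * (\<Prod>k\<in>UNIV - {i,j}. diag_mat ?l$k$(?t k))"
      by (subst coeff_prod_lin[where S="{i,j}"]) (use ij in \<open>auto simp: diag_entry Transposition.transpose_def\<close>)
    also have "\<dots> = A$i$j * A$j$i" using ij by (simp add: diag_entry Transposition.transpose_def)
    finally show ?thesis using ij by (simp add: sign_swap_id)
  qed
  finally show ?thesis by simp
qed

lemma PP_eq:
  fixes A :: "real^'n::finite^'n"
  assumes as: "associated_matrix a A"
    and e: "(\<Prod>k\<in>UNIV. [:l k, 1:]) = (\<Prod>k\<in>UNIV. [:l' k, 1:])"
  shows "PP (diag_mat l) A = PP (diag_mat l') A"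
proof -
  have "poly (PP (diag_mat l) A) s = poly (PP (diag_mat l') A) s" for s
  proof -
    have h: "\<And>l. poly (PP (diag_mat l) A) s = poly (nuij_poly CARD('n) a (\<Prod>i\<in>UNIV. [:l i, 1:]) s) 0"
      using as unfolding associated_matrix_def by (simp add: poly_PP)
    show ?thesis using h[of l] h[of l'] e by simp
  qed
  then show ?thesis by (intro poly_eq_poly_eq_iff[THEN iffD1] ext)
qed

lemma prod1:
  "(\<Prod>k\<in>(UNIV::'n::finite set). [:if k = i then 0 else 1, 1:]) = [:0,1::real:] * [:1,1:] ^ (CARD('n) - 1)"
proof -
  have "(\<Prod>k\<in>(UNIV::'n set). [:if k = i then 0 else 1, 1:]) = [:if i = i then 0 else 1, 1:] * (\<Prod>k\<in>UNIV - {i}. [:if k = i then 0 else 1, 1:])"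
    by (rule prod.remove) auto
  also have "(\<Prod>k\<in>UNIV - {i}. [:if k = i then 0 else (1::real), 1:]) = (\<Prod>k\<in>UNIV - {i}. [:1, 1:])"
    by (rule prod.cong) auto
  finally show ?thesis by (simp add: card_Diff_singleton)
qed

lemma prod2:
  assumes "i \<noteq> j"
  shows "(\<Prod>k\<in>(UNIV::'n::finite set). [:if k = i \<or> k = j then 0 else 1, 1:]) = [:0,1::real:]^2 * [:1,1:] ^ (CARD('n) - 2)"
proof -
  have "(\<Prod>k\<in>(UNIV::'n set). [:if k = i \<or> k = j then 0 else 1, 1:]) = (\<Prod>k\<in>UNIV - {i,j}. [:if k = i \<or> k = j then 0 else 1, 1:]) * (\<Prod>k\<in>{i,j}. [:if k = i \<or> k = j then 0 else 1, 1:])"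
    by (rule prod.subset_diff) auto
  also have "(\<Prod>k\<in>UNIV - {i,j}. [:if k = i \<or> k = j then 0 else (1::real), 1:]) = (\<Prod>k\<in>UNIV - {i,j}. [:1, 1:])"
    by (rule prod.cong) auto
  also have "(\<Prod>k\<in>{i,j}. [:if k = i \<or> k = j then 0 else (1::real), 1:]) = [:0,1:]^2"
    using assms by (simp add: power2_eq_square)
  finally show ?thesis using assms by (simp add: card_Diff_subset mult.commute numeral_2_eq_2)
qed

theorem lemma3p4:
  fixes a :: "nat \<Rightarrow> real" and A :: "real^'n::finite^'n"
  assumes "a \<in> UN_d TYPE('n)"
    and "associated_matrix a A"
  shows "\<exists>\<beta>::real. \<forall>i j. i \<noteq> j \<longrightarrow> (A $ i $ j)\<^sup>2 = \<beta>\<^sup>2"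
proof (cases "\<exists>i0 j0::'n. i0 \<noteq> j0")
  case False then show ?thesis by blast
next
  case True
  then obtain i0 j0 :: 'n where ij0: "i0 \<noteq> j0" by blast
  have sym: "A$i$j = A$j$i" for i j
    using assms(2) unfolding associated_matrix_def by (metis transpose_def vec_lambda_beta)
  have diag: "A$i$i = A$i0$i0" for i
    using coeff1[of i A] coeff1[of i0 A]
      PP_eq[OF assms(2), of "\<lambda>k. if k = i then 0 else 1" "\<lambda>k. if k = i0 then 0 else 1"]
    by (simp add: prod1)
  have off: "A$i$i * A$j$j - A$i$j * A$j$i = A$i0$i0 * A$j0$j0 - A$i0$j0 * A$j0$i0" if "i \<noteq> j" for i j
    using coeff2[OF that, of A] coeff2[OF ij0, of A]
      PP_eq[OF assms(2), of "\<lambda>k. if k = i \<or> k = j then 0 else 1" "\<lambda>k. if k = i0 \<or> k = j0 then 0 else 1"]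
    by (simp add: prod2 that ij0)
  show ?thesis
  proof (intro exI allI impI)
    fix i j :: 'n assume "i \<noteq> j"
    from off[OF this] diag[of i] diag[of j] diag[of j0] sym[of i j] sym[of i0 j0]
    show "(A$i$j)\<^sup>2 = (A$i0$j0)\<^sup>2" by (simp add: power2_eq_square)
  qed
qed

end
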